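(* Let $\omega$ be a non-quasianalytic concave weight function and let $f:[0,\infty)\to[0,\infty)$ be any function with $\omega(t)=o(f(t))$ as $t\to\infty$. Then there exists a non-quasianalytic concave weight function $\tilde\omega$ such that $\omega(t)=o(\tilde\omega(t))$ and $\tilde\omega(t)=o(f(t))$ as $t\to\infty$.
   Context: A weight function is a continuous increasing $\omega:[0,\infty)\to[0,\infty)$ with $\omega(2t)=O(\omega(t))$, $\omega(t)=o(t)$, $\log t=o(\omega(t))$ as $t\to\infty$, and such that $t\mapsto\omega(e^t)$ is convex on $[0,\infty)$. It is non-quasianalytic if $\int_1^\infty\omega(t)t^{-2}\,dt<\infty$. *)

theory Defs
  imports "HOL-Analysis.Analysis" "HOL-Library.Landau_Symbols"
begin

text \<open>Weight functions omega : [0,inf) -> [0,inf), modelled as real functions whose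
  relevant behaviour is restricted to the half-line {0..}.\<close>
definition weight_function :: "(real \<Rightarrow> real) \<Rightarrow> bool" where
  "weight_function w \<longleftrightarrow>
     continuous_on {0..} w \<and>
     mono_on {0..} w \<and>
     (\<forall>t\<ge>0. w t \<ge> 0) \<and>
     (\<lambda>t. w (2 * t)) \<in> O[at_top](w) \<and>
     w \<in> o[at_top](\<lambda>t. t) \<and>
     (\<lambda>t. ln t) \<in> o[at_top](w) \<and>
     convex_on {0..} (\<lambda>t. w (exp t))"

definition non_quasianalytic :: "(real \<Rightarrow> real) \<Rightarrow> bool" where
  "non_quasianalytic w \<longleftrightarrow> (\<lambda>t. w t / t ^ 2) integrable_on {1..}"

definition concave_weight :: "(real \<Rightarrow> real) \<Rightarrow> bool" where
  "concave_weight w \<longleftrightarrow> weight_function w \<and> concave_on {0..} w"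

end

theory Submission
  imports Defs
begin

lemma chord_mono:
  fixes f :: "real \<Rightarrow> real"
  assumes f: "convex_on I f" and I: "a1 \<in> I" "b1 \<in> I" "a2 \<in> I" "b2 \<in> I"
    and "a1 < b1" "a2 < b2" "a1 \<le> a2" "b1 \<le> b2"
  shows "(f b1 - f a1) / (b1 - a1) \<le> (f b2 - f a2) / (b2 - a2)"
proof -
  have s1: "(f b1 - f a1) / (b1 - a1) \<le> (f b2 - f a1) / (b2 - a1)"
  proof (cases "b1 = b2")
    case False
    then have "a1 < b1" "b1 < b2" using assms by auto
    from convex_on_slope_le(1)[OF f I(1) I(4) this] show ?thesis
      by (smt (verit, ccfv_SIG) minus_divide_divide)
  qed simp
  have s2: "(f b2 - f a1) / (b2 - a1) \<le> (f b2 - f a2) / (b2 - a2)"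
  proof (cases "a1 = a2")
    case False
    then have "a1 < a2" "a2 < b2" using assms by auto
    from convex_on_slope_le(2)[OF f I(1) I(4) this] show ?thesis
      by (smt (verit, ccfv_SIG) minus_divide_divide)
  qed simp
  from s1 s2 show ?thesis by linarith
qed

lemma int_deriv:
  fixes g :: "real \<Rightarrow> real"
  assumes "continuous_on {a..} g" "a < t"
  shows "((\<lambda>x. integral {a..x} g) has_real_derivative g t) (at t)"
proof -
  have "continuous_on {a..t+1} g" using assms(1) by (rule continuous_on_subset) auto
  from integral_has_real_derivative[OF this, of t] assms(2)
  have "((\<lambda>x. integral {a..x} g) has_real_derivative g t) (at t within {a..t+1})" by simp
  moreover have "at t within {a..t+1} = at t"
    by (rule at_within_interior) (use assms(2) in simp)
  ultimately show ?thesis by simp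
qed

lemma mc_lemma:
  fixes g :: "real \<Rightarrow> real"
  assumes cg: "continuous_on {a..} g" and nn: "\<And>x. a \<le> x \<Longrightarrow> 0 \<le> g x"
    and bd: "\<And>b. a \<le> b \<Longrightarrow> integral {a..b} g \<le> B"
  shows "g integrable_on {a..}"
    and "((\<lambda>k. integral {a..a + real k} g) \<longlongrightarrow> integral {a..} g) sequentially"
proof -
  define F where "F k x = (if x \<in> {a..a + real k} then g x else 0)" for k x
  have gi: "g integrable_on {a..a + real k}" for k
    by (rule integrable_continuous_interval) (rule continuous_on_subset[OF cg], auto)
  have Fi: "F k integrable_on {a..}" for k
  proof (rule integrable_on_superset)
    show "F k integrable_on {a..a + real k}"
      using gi[of k] by (rule integrable_eq) (simp add: F_def)
  qed (auto simp: F_def)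
  have FI: "integral {a..} (F k) = integral {a..a + real k} g" for k
  proof -
    have "integral {a..} (F k) = integral ({a..a + real k} \<inter> {a..}) g"
      unfolding F_def by (rule Henstock_Kurzweil_Integration.integral_restrict_Int)
    also have "{a..a + real k} \<inter> {a..} = {a..a + real k}" by auto
    finally show ?thesis .
  qed
  have mono: "F k x \<le> F (Suc k) x" if "x \<in> {a..}" for k x
    using that nn by (auto simp: F_def)
  have conv: "((\<lambda>k. F k x) \<longlongrightarrow> g x) sequentially" if "x \<in> {a..}" for x
  proof (rule tendsto_eventually)
    obtain N :: nat where "x - a \<le> real N" using real_arch_simple by blast
    then show "\<forall>\<^sub>F k in sequentially. F k x = g x"
      unfolding eventually_sequentially using that
      by (intro exI[of _ N]) (auto simp: F_def)
  qed
  have bnd: "bounded (range (\<lambda>k. integral {a..} (F k)))"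
  proof -
    have "\<bar>integral {a..} (F k)\<bar> \<le> B" for k
    proof -
      have "0 \<le> integral {a..a + real k} g"
        using gi by (intro integral_nonneg) (auto intro: nn)
      moreover have "integral {a..a + real k} g \<le> B" by (rule bd) simp
      ultimately show ?thesis by (simp add: FI)
    qed
    then show ?thesis unfolding bounded_real by blast
  qed
  from monotone_convergence_increasing[OF Fi mono conv bnd]
  show "g integrable_on {a..}"
    and "((\<lambda>k. integral {a..a + real k} g) \<longlongrightarrow> integral {a..} g) sequentially"
    by (auto simp: FI)
qed

locale L =
  fixes w f :: "real \<Rightarrow> real"
  assumes cont: "continuous_on {0..} w" and wmono: "mono_on {0..} w"
    and wnn: "\<forall>t\<ge>0. w t \<ge> 0"
    and conc: "concave_on {0..} w" and lcvx: "convex_on {0..} (\<lambda>t. w (exp t))"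
    and small: "w \<in> o[at_top](\<lambda>t. t)" and big: "(\<lambda>t. ln t) \<in> o[at_top](w)"
    and nq: "(\<lambda>t. w t / t ^ 2) integrable_on {1..}"
    and fnn: "\<forall>t\<ge>0. f t \<ge> 0" and wf: "w \<in> o[at_top](f)"

context L begin

definition "dl t = (w t - w (t/2)) / t"

lemma w_nn: "0 \<le> t \<Longrightarrow> 0 \<le> w t" using wnn by auto

lemma w_mono: "0 \<le> s \<Longrightarrow> s \<le> t \<Longrightarrow> w s \<le> w t"
  using wmono by (auto simp: mono_on_def)

lemma dl_anti: assumes "0 < s" "s \<le> t" shows "dl t \<le> dl s"
proof -
  have c: "convex_on {0..} (\<lambda>x. - w x)" using conc by (simp add: concave_on_def)
  have "((- w s) - (- w (s/2))) / (s - s/2) \<le> ((- w t) - (- w (t/2))) / (t - t/2)"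
    by (rule chord_mono[OF c]) (use assms in auto)
  then have "- (w s - w (s/2)) / (s/2) \<le> - (w t - w (t/2)) / (t/2)" by (simp add: field_simps)
  then have "(w t - w (t/2)) / (t/2) \<le> (w s - w (s/2)) / (s/2)"
    by (smt (verit) minus_divide_left)
  then show ?thesis using assms unfolding dl_def by (simp add: field_simps)
qed

lemma tdl_mono: assumes "2 \<le> s" "s \<le> t" shows "w s - w (s/2) \<le> w t - w (t/2)"
proof -
  have l2: "ln 2 > (0::real)" by simp
  have a: "ln 2 \<le> ln s" using assms by simp
  have b: "ln s \<le> ln t" using assms by simp
  have c: "0 \<le> ln s" "0 \<le> ln t" using l2 a b by linarith+
  have "(w (exp (ln s)) - w (exp (ln s - ln 2))) / (ln s - (ln s - ln 2))
      \<le> (w (exp (ln t)) - w (exp (ln t - ln 2))) / (ln t - (ln t - ln 2))"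
    by (intro chord_mono[OF lcvx]) (use l2 a b c in auto)
  moreover have "exp (ln s) = s" "exp (ln t) = t" "exp (ln s - ln 2) = s/2" "exp (ln t - ln 2) = t/2"
    using assms by (auto simp: exp_diff)
  ultimately show ?thesis using l2 by (simp add: divide_right_mono_neg divide_le_cancel)
qed

lemma dl_nn: "0 < t \<Longrightarrow> 0 \<le> dl t"
  unfolding dl_def by (intro divide_nonneg_pos) (auto intro!: w_mono)

lemma dl_le: "0 < t \<Longrightarrow> dl t \<le> w t / t"
  unfolding dl_def by (intro divide_right_mono) (auto intro!: w_nn)

lemma w_half: assumes "0 \<le> t" shows "w t \<le> 2 * w (t/2)"
proof -
  have "(1/2) * w 0 + (1/2) * w t \<le> w ((1 - 1/2) *\<^sub>R 0 + (1/2) *\<^sub>R t)"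
    using concave_onD[OF conc, of "1/2" 0 t] assms by simp
  then show ?thesis using w_nn[of 0] by simp
qed

lemma w_at_top: "filterlim w at_top at_top"
proof -
  have "\<forall>\<^sub>F t in at_top. norm (ln t) \<le> 1 * norm (w t)"
    using landau_o.smallD[OF big, of 1] by simp
  moreover have "\<forall>\<^sub>F t in at_top. (1::real) \<le> t" by (rule eventually_ge_at_top)
  ultimately have "\<forall>\<^sub>F t in at_top. ln t \<le> w t"
    by eventually_elim (auto simp: w_nn)
  then show ?thesis using filterlim_at_top_mono ln_at_top by blast
qed

lemma dl_to0: "(dl \<longlongrightarrow> 0) at_top"
proof (rule tendstoI)
  fix e :: real assume e: "e > 0"
  have "\<forall>\<^sub>F t in at_top. norm (w t) \<le> (e/2) * norm t"
    using landau_o.smallD[OF small, of "e/2"] e by simp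
  moreover have "\<forall>\<^sub>F t in at_top. (1::real) \<le> t" by (rule eventually_ge_at_top)
  ultimately show "\<forall>\<^sub>F t in at_top. dist (dl t) 0 < e"
  proof eventually_elim
    case (elim t)
    then have "w t / t \<le> e/2" using w_nn[of t] by (simp add: field_simps)
    then have "dl t \<le> e/2" using dl_le[of t] elim by linarith
    then show ?case using dl_nn[of t] elim e by simp
  qed
qed

lemma exists_T0: "\<exists>T0\<ge>4. dl T0 > 0"
proof (rule ccontr)
  assume "\<not> ?thesis"
  then have h: "w t \<le> w (t/2)" if "t \<ge> 4" for t
    using that unfolding dl_def by (auto simp: not_less divide_le_0_iff)
  have ind: "w (4 * 2 ^ n) \<le> w 4" for n
  proof (induction n)
    case (Suc n)
    have p: "(1::real) \<le> 2 ^ n" by (rule one_le_power) simp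
    have "w (4 * 2 ^ Suc n) \<le> w (4 * 2 ^ Suc n / 2)"
      by (rule h) (use p in \<open>unfold power_Suc, linarith\<close>)
    also have "4 * 2 ^ Suc n / 2 = (4 * 2 ^ n :: real)" by simp
    finally show ?case using Suc by simp
  qed simp
  have "\<forall>\<^sub>F t in at_top. w t > w 4"
    using w_at_top by (simp add: filterlim_at_top_dense)
  then obtain M where M: "\<And>t. t \<ge> M \<Longrightarrow> w t > w 4"
    by (auto simp: eventually_at_top_linorder)
  obtain n :: nat where "M \<le> real n" using real_arch_simple by blast
  moreover have "real n \<le> 4 * 2 ^ n"
  proof -
    have "real n < real (2 ^ n)" using less_exp[of n] by linarith
    then have "real n < 2 ^ n" by simp
    moreover have "(0::real) \<le> real n" by simp
    ultimately show ?thesis by linarith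
  qed
  ultimately have "w (4 * 2 ^ n) > w 4" using M by simp
  with ind[of n] show False by simp
qed

end

lemma deriv_mono_lemma:
  fixes f f' :: "real \<Rightarrow> real"
  assumes "a \<le> b" "\<And>x. a \<le> x \<Longrightarrow> x \<le> b \<Longrightarrow> (f has_real_derivative f' x) (at x)"
    "\<And>x. a \<le> x \<Longrightarrow> x \<le> b \<Longrightarrow> 0 \<le> f' x"
  shows "f a \<le> f b"
proof (rule DERIV_nonneg_imp_increasing_open[OF assms(1)])
  show "continuous_on {a..b} f"
    by (rule DERIV_atLeastAtMost_imp_continuous_on) (use assms(2) in blast)
qed (use assms in force)

context L begin

definition "iw t = integral {1..t} (\<lambda>u. w u / u)"
definition "w1 t = iw t - iw (t/2)"

lemma w_isCont: "0 < t \<Longrightarrow> isCont w t"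
  using continuous_on_interior[OF cont, of t] by simp

lemma cont_wu: "continuous_on {1..} (\<lambda>u. w u / u)"
  by (intro continuous_intros continuous_on_subset[OF cont]) auto

lemma iw_deriv: "1 < t \<Longrightarrow> (iw has_real_derivative w t / t) (at t)"
  unfolding iw_def using int_deriv[OF cont_wu] .

lemma w1_deriv: assumes "2 < t" shows "(w1 has_real_derivative dl t) (at t)"
proof -
  have d1: "(iw has_real_derivative w t / t) (at t)" using assms by (intro iw_deriv) simp
  have d2: "((\<lambda>x. iw (x/2)) has_real_derivative (w (t/2) / (t/2)) * (1/2)) (at t)"
    by (rule DERIV_chain2[OF iw_deriv]) (use assms in \<open>auto intro!: derivative_eq_intros\<close>)
  have "(w1 has_real_derivative w t / t - (w (t/2) / (t/2)) * (1/2)) (at t)"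
    unfolding w1_def[abs_def] by (rule DERIV_diff[OF d1 d2])
  moreover have "w t / t - (w (t/2) / (t/2)) * (1/2) = dl t"
    using assms unfolding dl_def by (simp add: field_simps)
  ultimately show ?thesis by simp
qed

lemma w1_eq: assumes "2 \<le> t" shows "w1 t = integral {t/2..t} (\<lambda>u. w u / u)"
proof -
  have "(\<lambda>u. w u / u) integrable_on {1..t}"
    by (rule integrable_continuous_interval, rule continuous_on_subset[OF cont_wu]) auto
  from Henstock_Kurzweil_Integration.integral_combine[OF _ _ this, of "t/2"] assms
  show ?thesis unfolding w1_def iw_def by simp
qed

lemma w1_bounds: assumes "2 \<le> t" shows "w t / 4 \<le> w1 t" "w1 t \<le> w t"
proof -
  have int: "(\<lambda>u. w u / u) integrable_on {t/2..t}"
    by (rule integrable_continuous_interval, rule continuous_on_subset[OF cont_wu]) (use assms in auto)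
  have "integral {t/2..t} (\<lambda>u. w u / u) \<le> integral {t/2..t} (\<lambda>u. 2 * w t / t)"
  proof (rule integral_le[OF int])
    fix u assume u: "u \<in> {t/2..t}"
    then have "w u \<le> w t" "0 \<le> w u" using assms by (auto intro!: w_mono w_nn)
    moreover have "1 / u \<le> 2 / t" using u assms by (auto simp: field_simps)
    ultimately have "w u * (1/u) \<le> w t * (2/t)"
      by (intro mult_mono) (use u assms in auto)
    then show "w u / u \<le> 2 * w t / t" by (simp add: mult.commute)
  qed (rule integrable_const_ivl)
  also have "\<dots> = w t" using assms by simp
  finally show "w1 t \<le> w t" using w1_eq[OF assms] by simp
  have "integral {t/2..t} (\<lambda>u. w (t/2) / t) \<le> integral {t/2..t} (\<lambda>u. w u / u)"
  proof (rule integral_le[OF _ int])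
    fix u assume u: "u \<in> {t/2..t}"
    then have "w (t/2) \<le> w u" "0 \<le> w (t/2)" using assms by (auto intro!: w_mono w_nn)
    moreover have "1 / t \<le> 1 / u" using u assms by (auto simp: field_simps)
    ultimately have "w (t/2) * (1/t) \<le> w u * (1/u)"
      by (intro mult_mono) (use u assms in auto)
    then show "w (t/2) / t \<le> w u / u" by simp
  qed (rule integrable_const_ivl)
  moreover have "integral {t/2..t} (\<lambda>u. w (t/2) / t) = w (t/2) / 2" using assms by simp
  moreover have "w t \<le> 2 * w (t/2)" using w_half assms by simp
  ultimately show "w t / 4 \<le> w1 t" using w1_eq[OF assms] by simp
qed

end

context L begin

definition "g u = w u / u ^ 2"
definition "II = integral {1..} g"
definition "R t = II - integral {1..t} g + 1 / t"
definition "h t = (g t + 1 / t ^ 2) / sqrt (R t)"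

lemma cont_g: "continuous_on {1..} g"
  unfolding g_def[abs_def] by (intro continuous_intros continuous_on_subset[OF cont]) auto

lemma g_nn: "1 \<le> t \<Longrightarrow> 0 \<le> g t"
  unfolding g_def using w_nn[of t] by simp

lemma g_int: "g integrable_on {1..}" using nq unfolding g_def[abs_def] .

lemma g_int_sub: "g integrable_on {1..t}"
  by (rule integrable_continuous_interval, rule continuous_on_subset[OF cont_g]) auto

lemma int_le_II: "integral {1..t} g \<le> II"
proof (cases "1 \<le> t")
  case True
  show ?thesis unfolding II_def
    by (rule integral_subset_le[OF _ g_int_sub g_int]) (auto intro: g_nn)
next
  case False
  then have "{1..t} = {}" by auto
  moreover have "0 \<le> II" unfolding II_def using g_int by (intro integral_nonneg) (auto intro: g_nn)
  ultimately show ?thesis by simp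
qed

lemma int_mono: assumes "s \<le> t" shows "integral {1..s} g \<le> integral {1..t} g"
proof (cases "1 \<le> s")
  case True
  show ?thesis
    by (rule integral_subset_le[OF _ g_int_sub g_int_sub]) (use assms in \<open>auto intro: g_nn\<close>)
next
  case False
  then have "{1..s} = {}" by auto
  moreover have "0 \<le> integral {1..t} g" using g_int_sub by (intro integral_nonneg) (auto intro: g_nn)
  ultimately show ?thesis by simp
qed

lemma R_pos: assumes "0 < t" shows "0 < R t"
proof -
  have "0 < 1 / t" using assms by simp
  then show ?thesis unfolding R_def using int_le_II[of t] by linarith
qed

lemma R_anti: assumes "0 < s" "s \<le> t" shows "R t \<le> R s"
proof -
  have "1 / t \<le> 1 / s" using assms by (simp add: frac_le)
  then show ?thesis unfolding R_def using int_mono[OF assms(2)] by linarith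
qed

lemma R_deriv: assumes "1 < t" shows "(R has_real_derivative (- g t - 1 / t ^ 2)) (at t)"
proof -
  have d1: "((\<lambda>x. integral {1..x} g) has_real_derivative g t) (at t)"
    by (rule int_deriv[OF cont_g assms])
  have d2: "((\<lambda>x. 1 / x) has_real_derivative - (1 / t ^ 2)) (at t)"
    using assms by (auto intro!: derivative_eq_intros simp: power2_eq_square field_simps)
  have "((\<lambda>x. II - integral {1..x} g + 1 / x) has_real_derivative (0 - g t + - (1 / t ^ 2))) (at t)"
    by (intro DERIV_add DERIV_diff DERIV_const d1 d2)
  then show ?thesis unfolding R_def[abs_def] by simp
qed

lemma R_isCont: "1 < t \<Longrightarrow> isCont R t"
  using R_deriv DERIV_isCont by blast

lemma sqrtR_deriv: assumes "1 < t"
  shows "((\<lambda>x. - 2 * sqrt (R x)) has_real_derivative h t) (at t)"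
proof -
  have Rp: "0 < R t" using R_pos assms by simp
  have "((\<lambda>x. - 2 * sqrt (R x)) has_real_derivative - 2 * (inverse (sqrt (R t)) / 2 * (- g t - 1 / t ^ 2))) (at t)"
    by (intro DERIV_cmult DERIV_chain2[OF DERIV_real_sqrt[OF Rp] R_deriv[OF assms]])
  moreover have "sqrt (R t) \<noteq> 0" using Rp by simp
  then have "- 2 * (inverse (sqrt (R t)) / 2 * (- g t - 1 / t ^ 2)) = h t"
    unfolding h_def by (simp add: field_simps)
  ultimately show ?thesis by simp
qed

lemma h_nn: "1 \<le> t \<Longrightarrow> 0 \<le> h t"
  unfolding h_def using g_nn[of t] R_pos[of t] by simp

lemma h_cont: "continuous_on {2..} h"
proof (rule continuous_at_imp_continuous_on, safe)
  fix t :: real assume t: "2 \<le> t"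
  have "isCont g t" using continuous_on_interior[OF cont_g, of t] t by simp
  moreover have "isCont R t" using R_isCont t by simp
  moreover have "R t > 0" using R_pos t by simp
  ultimately show "isCont h t" unfolding h_def[abs_def] using t
    by (intro continuous_intros) auto
qed

lemma h_integral: assumes "2 \<le> b" shows "integral {2..b} h \<le> 2 * sqrt (R 2)"
proof -
  have "(h has_integral ((- 2 * sqrt (R b)) - (- 2 * sqrt (R 2)))) {2..b}"
  proof (rule fundamental_theorem_of_calculus[OF assms])
    fix x assume "x \<in> {2..b}"
    then have "((\<lambda>x. - 2 * sqrt (R x)) has_real_derivative h x) (at x)"
      by (intro sqrtR_deriv) auto
    then show "((\<lambda>x. - 2 * sqrt (R x)) has_vector_derivative h x) (at x within {2..b})"
      by (simp add: has_real_derivative_iff_has_vector_derivative has_vector_derivative_at_within)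
  qed
  then have "integral {2..b} h = 2 * sqrt (R 2) - 2 * sqrt (R b)" by (simp add: integral_unique)
  moreover have "0 \<le> sqrt (R b)" using R_pos[of b] assms by simp
  ultimately show ?thesis by simp
qed

lemma h_int: "h integrable_on {2..}"
  by (rule mc_lemma(1)[OF h_cont _ h_integral]) (auto intro: h_nn)

lemma R_to0: assumes "r > 0" shows "\<exists>M. \<forall>t\<ge>M. R t \<le> r"
proof -
  have lim: "((\<lambda>k. integral {1..1 + real k} g) \<longlongrightarrow> II) sequentially"
    unfolding II_def by (rule mc_lemma(2)[OF cont_g _ int_le_II[unfolded II_def]]) (auto intro: g_nn)
  then have "\<forall>\<^sub>F k in sequentially. dist (integral {1..1 + real k} g) II < r / 2"
    using assms by (intro tendstoD) auto
  then obtain k where k: "dist (integral {1..1 + real k} g) II < r / 2"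
    using eventually_sequentially by auto
  show ?thesis
  proof (intro exI[of _ "max (1 + real k) (2 / r)"] allI impI)
    fix t assume t: "max (1 + real k) (2 / r) \<le> t"
    have "integral {1..1 + real k} g \<le> integral {1..t} g" using t by (intro int_mono) simp
    moreover have "1 / t \<le> r / 2"
    proof -
      have "2 / r \<le> t" using t by simp
      moreover have "0 < 2 / r" using assms by simp
      ultimately have "0 < t" by linarith
      moreover have "2 \<le> r * t" using \<open>2 / r \<le> t\<close> assms by (simp add: field_simps)
      ultimately
      show ?thesis using assms by (simp add: field_simps)
    qed
    moreover have "II - integral {1..1 + real k} g < r / 2"
      using k unfolding dist_real_def by linarith
    ultimately show "R t \<le> r" unfolding R_def by linarith
  qed
qed

end

context L begin

definition "T0 = (SOME T. T \<ge> 4 \<and> dl T > 0)"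

lemma T0: "4 \<le> T0" "0 < dl T0"
  using someI_ex[OF exists_T0] unfolding T0_def by auto

lemma dl_pos: assumes "T0 \<le> t" shows "0 < dl t"
proof -
  have "w T0 - w (T0/2) \<le> w t - w (t/2)" using T0 assms by (intro tdl_mono) auto
  moreover have "0 < T0 * dl T0" using T0 by simp
  moreover have "T0 * dl T0 = w T0 - w (T0/2)" "t * dl t = w t - w (t/2)"
    using T0 assms unfolding dl_def by auto
  ultimately have "0 < t * dl t" by linarith
  moreover have "0 < t" using T0 assms by simp
  ultimately show ?thesis by (simp add: zero_less_mult_iff)
qed

definition "P n t \<longleftrightarrow> R t \<le> 1 / (real n + 3)^2 \<and> (real n + 3)^2 * w t \<le> f t \<and> (real n + 3)^2 * w t \<le> t"

lemma P_ev: "\<exists>G. \<forall>t\<ge>G. P n t"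
proof -
  define c where "c = 1 / (real n + 3)^2"
  have c: "0 < c" unfolding c_def by simp
  obtain M where M: "\<And>t. t \<ge> M \<Longrightarrow> R t \<le> c" using R_to0[OF c] by blast
  have "\<forall>\<^sub>F t in at_top. R t \<le> c" using M eventually_at_top_linorder by blast
  moreover have "\<forall>\<^sub>F t in at_top. norm (w t) \<le> c * norm (f t)" using landau_o.smallD[OF wf c] .
  moreover have "\<forall>\<^sub>F t in at_top. norm (w t) \<le> c * norm t" using landau_o.smallD[OF small c] .
  moreover have "\<forall>\<^sub>F t in at_top. (0::real) \<le> t" by (rule eventually_ge_at_top)
  ultimately have "\<forall>\<^sub>F t in at_top. P n t"
  proof eventually_elim
    case (elim t)
    then have "w t \<le> c * f t" "w t \<le> c * t" using w_nn[of t] fnn by auto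
    then show ?case using elim unfolding P_def c_def by (auto simp: field_simps)
  qed
  then show ?thesis by (auto simp: eventually_at_top_linorder)
qed

definition "Gs n = (SOME G. \<forall>t\<ge>G. P n t)"
definition "T n = T0 + real n + (\<Sum>k\<le>n. \<bar>Gs k\<bar>)"

lemma TP: "T n \<le> t \<Longrightarrow> P n t"
proof -
  assume a: "T n \<le> t"
  have "Gs n \<le> \<bar>Gs n\<bar>" by simp
  also have "\<bar>Gs n\<bar> \<le> (\<Sum>k\<le>n. \<bar>Gs k\<bar>)" by (rule member_le_sum) auto
  finally have "Gs n \<le> T n" unfolding T_def using T0 by simp
  then show ?thesis using someI_ex[OF P_ev[of n]] a unfolding Gs_def by auto
qed

lemma T_ge: "T0 + real n \<le> T n"
  unfolding T_def by (simp add: sum_nonneg)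

lemma T_Suc: "T n + 1 \<le> T (Suc n)"
  unfolding T_def by simp

lemma T_mono: "m \<le> n \<Longrightarrow> T m \<le> T n"
  by (rule lift_Suc_mono_le[of T]) (use T_Suc in \<open>auto intro: order.trans[OF _ T_Suc]\<close>)

definition "y n = dl (T n) / 2 ^ n"

lemma T_pos: "T0 \<le> T n" using T_ge[of n] by simp

lemma y_pos: "0 < y n"
  unfolding y_def using dl_pos[OF T_pos] by simp

lemma y_shift: "y (k + n) \<le> y n / 2 ^ k"
proof -
  have "dl (T (k + n)) \<le> dl (T n)"
    by (rule dl_anti) (use T_pos[of n] T0 T_mono[of n "k+n"] in auto)
  then show ?thesis unfolding y_def by (simp add: power_add field_simps divide_right_mono)
qed

lemma y_anti: "m \<le> n \<Longrightarrow> y n \<le> y m"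
proof -
  assume "m \<le> n"
  then obtain k where n: "n = k + m" by (metis add.commute le_add_diff_inverse)
  have "y n \<le> y m / 2 ^ k" using y_shift n by simp
  also have "\<dots> \<le> y m" using y_pos[of m] by (simp add: divide_le_eq one_le_power)
  finally show ?thesis .
qed

lemma y_summ: "summable y"
proof (rule summable_comparison_test')
  show "summable (\<lambda>k. y 0 * (1/2) ^ k)" by (intro summable_mult) simp
  show "norm (y k) \<le> y 0 * (1/2) ^ k" for k
    using y_shift[of k 0] y_pos[of k] by (simp add: power_divide)
qed

definition "lam x = (\<Sum>k. min x (y k))"
definition "phi x = lam x / x"

lemma lam_summ: "0 \<le> x \<Longrightarrow> summable (\<lambda>k. min x (y k))"
  by (rule summable_comparison_test'[OF y_summ]) (use y_pos in \<open>auto simp: less_imp_le\<close>)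

lemma lam_mono: "0 \<le> x \<Longrightarrow> x \<le> x' \<Longrightarrow> lam x \<le> lam x'"
  unfolding lam_def by (rule suminf_le) (auto intro: lam_summ)

lemma phi_eq: "0 < x \<Longrightarrow> phi x = (\<Sum>k. min x (y k) / x)"
  unfolding phi_def lam_def by (rule suminf_divide[symmetric]) (rule lam_summ, simp)

lemma phi_anti: assumes "0 < x" "x \<le> x'" shows "phi x' \<le> phi x"
proof -
  have "(\<Sum>k. min x' (y k) / x') \<le> (\<Sum>k. min x (y k) / x)"
  proof (rule suminf_le)
    fix k
    show "min x' (y k) / x' \<le> min x (y k) / x"
      using assms y_pos[of k] by (auto simp: min_def field_simps mult_left_mono)
  qed (use assms in \<open>auto intro!: summable_divide lam_summ\<close>)
  then show ?thesis using phi_eq assms by simp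
qed

lemma lam_eq: "0 < x \<Longrightarrow> lam x = x * phi x"
  unfolding phi_def by simp

lemma phi_nn: "0 < x \<Longrightarrow> 0 \<le> phi x"
  unfolding phi_def lam_def using y_pos
  by (intro divide_nonneg_pos suminf_nonneg lam_summ) (auto simp: less_imp_le)

lemma phi_lower: assumes "0 < x" "x \<le> y n" shows "real n + 1 \<le> phi x"
proof -
  have "(\<Sum>k<Suc n. min x (y k)) \<le> lam x"
    unfolding lam_def using assms y_pos
    by (intro sum_le_suminf lam_summ) (auto simp: less_imp_le)
  moreover have "(\<Sum>k<Suc n. min x (y k)) = (\<Sum>k<Suc n. x)"
    by (rule sum.cong) (use assms y_anti in \<open>auto simp: min_def intro: order.trans\<close>)
  ultimately have "(real n + 1) * x \<le> lam x" by (simp add: add.commute)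
  then show ?thesis unfolding phi_def using assms by (simp add: field_simps)
qed

lemma phi_upper: assumes "y n \<le> x" shows "phi x \<le> real n + 2"
proof -
  have x: "0 < x" using y_pos[of n] assms by linarith
  have s: "summable (\<lambda>k. min x (y k))" using x by (intro lam_summ) simp
  have "lam x = (\<Sum>k. min x (y (k + n))) + (\<Sum>k<n. min x (y k))"
    unfolding lam_def by (rule suminf_split_initial_segment[OF s])
  moreover have "(\<Sum>k<n. min x (y k)) \<le> (\<Sum>k<n. x)" by (intro sum_mono) simp
  moreover have "(\<Sum>k. min x (y (k + n))) \<le> (\<Sum>k. y n * (1/2) ^ k)"
  proof (rule suminf_le)
    show "summable (\<lambda>k. min x (y (k + n)))" using summable_iff_shift[where f="\<lambda>k. min x (y k)" and k=n] s by simp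
    show "min x (y (k + n)) \<le> y n * (1/2) ^ k" for k
      using y_shift[of k n] by (simp add: power_divide min_le_iff_disj)
  qed (intro summable_mult, simp)
  moreover have "(\<Sum>k. y n * (1/2) ^ k) = 2 * y n"
    by (subst suminf_mult) (auto simp: suminf_geometric)
  ultimately have "lam x \<le> (real n + 2) * x" using assms by (simp add: algebra_simps)
  then show ?thesis unfolding phi_def using x by (simp add: field_simps)
qed

lemma lam_isCont: assumes "0 < x" shows "isCont lam x"
proof -
  have "(phi (x/2))-lipschitz_on {x/2..} lam"
  proof (rule lipschitz_onI)
    show "0 \<le> phi (x/2)" using assms by (intro phi_nn) simp
    have *: "lam b - lam a \<le> phi (x/2) * (b - a)" if ab: "x/2 \<le> a" "a \<le> b" for a b
    proof -
      have a0: "0 < a" using ab assms by simp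
      have "lam b = b * phi b" "lam a = a * phi a" using a0 ab by (auto intro!: lam_eq)
      moreover have "phi b \<le> phi a" using a0 ab by (intro phi_anti) auto
      moreover have "phi a \<le> phi (x/2)" using ab assms by (intro phi_anti) auto
      moreover have "0 \<le> phi b" using a0 ab by (intro phi_nn) simp
      ultimately have "lam b - lam a \<le> (b - a) * phi a"
        using ab a0 by (simp add: algebra_simps mult_left_mono)
      also have "\<dots> \<le> (b - a) * phi (x/2)" using ab \<open>phi a \<le> phi (x/2)\<close> by (intro mult_left_mono) auto
      finally show ?thesis by (simp add: mult.commute)
    qed
    fix a b assume ab: "a \<in> {x/2..}" "b \<in> {x/2..}"
    show "dist (lam a) (lam b) \<le> phi (x/2) * dist a b"
    proof (cases "a \<le> b")
      case True
      then show ?thesis using *[of a b] ab lam_mono[of a b] assms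
        by (simp add: dist_real_def abs_if)
    next
      case False
      then show ?thesis using *[of b a] ab lam_mono[of b a] assms
        by (simp add: dist_real_def abs_if)
    qed
  qed
  then have "continuous_on {x/2..} lam" by (rule lipschitz_on_continuous_on)
  then show ?thesis using continuous_on_interior[of "{x/2..}" lam x] assms by simp
qed

end

context L begin

definition "DD t = lam (dl (max t T0))"
definition "wt t = integral {-1..t} DD"

lemma dl_isCont: assumes "0 < t" shows "isCont dl t"
proof -
  have "isCont w t" by (rule w_isCont[OF assms])
  moreover have "isCont (\<lambda>x. w (x/2)) t"
    by (rule isCont_o2[where f="\<lambda>x. x/2" and g=w]) (use assms in \<open>auto intro!: w_isCont continuous_intros\<close>)
  ultimately
  show ?thesis unfolding dl_def[abs_def] using assms by (intro continuous_intros) auto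
qed

lemma DD_isCont: "isCont DD t"
proof -
  have m: "T0 \<le> max t T0" by simp
  have c1: "isCont (\<lambda>x. max x T0) t" by (intro continuous_intros)
  have c2: "isCont (\<lambda>x. dl (max x T0)) t"
    by (rule isCont_o2[OF c1]) (rule dl_isCont, use T0 m in linarith)
  have "isCont (\<lambda>x. lam (dl (max x T0))) t"
    by (rule isCont_o2[OF c2]) (rule lam_isCont[OF dl_pos[OF m]])
  then show ?thesis unfolding DD_def[abs_def] .
qed

lemma DD_cont: "continuous_on S DD"
  by (intro continuous_at_imp_continuous_on ballI DD_isCont)

lemma DD_eq: "T0 \<le> u \<Longrightarrow> DD u = dl u * phi (dl u)"
  unfolding DD_def using dl_pos[of u] by (simp add: lam_eq max_def)

lemma DD_nn: "0 \<le> DD t"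
  unfolding DD_def lam_def using y_pos dl_pos[of "max t T0"]
  by (intro suminf_nonneg lam_summ) (auto simp: less_imp_le)

lemma DD_anti: assumes "s \<le> t" shows "DD t \<le> DD s"
proof -
  have "dl (max t T0) \<le> dl (max s T0)" using assms T0 by (intro dl_anti) (auto simp: max_def)
  moreover have "0 \<le> dl (max t T0)" using dl_pos[of "max t T0"] by simp
  ultimately show ?thesis unfolding DD_def by (rule lam_mono[rotated])
qed

lemma tDD_mono1: assumes "T0 \<le> s" "s \<le> t" shows "s * DD s \<le> t * DD t"
proof -
  have e1: "s * DD s = (s * dl s) * phi (dl s)" using DD_eq[of s] assms by simp
  have e2: "t * DD t = (t * dl t) * phi (dl t)" using DD_eq[of t] assms by simp
  have "s * dl s = w s - w (s/2)" "t * dl t = w t - w (t/2)"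
    using assms T0 unfolding dl_def by auto
  moreover have "w s - w (s/2) \<le> w t - w (t/2)" using assms T0 by (intro tdl_mono) auto
  ultimately have a: "s * dl s \<le> t * dl t" by simp
  have b: "phi (dl s) \<le> phi (dl t)"
    using assms T0 dl_pos[of t] by (intro phi_anti dl_anti) auto
  have c: "0 \<le> t * dl t" using assms T0 dl_pos[of t] by simp
  have d: "0 \<le> phi (dl s)" using dl_pos[of s] assms by (intro phi_nn) simp
  show ?thesis unfolding e1 e2 by (rule mult_mono[OF a b c d])
qed

lemma DD_const: "t \<le> T0 \<Longrightarrow> DD t = DD T0"
  unfolding DD_def by (simp add: max_def)

lemma tDD_mono: assumes "0 \<le> s" "s \<le> t" shows "s * DD s \<le> t * DD t"
proof (cases "T0 \<le> s")
  case True
  then show ?thesis using tDD_mono1 assms by simp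
next
  case False
  then have e: "DD s = DD T0" by (intro DD_const) simp
  show ?thesis
  proof (cases "t \<le> T0")
    case True
    have "DD t = DD T0" using True by (rule DD_const)
    then show ?thesis unfolding e using mult_right_mono[OF assms(2) DD_nn[of T0]] by simp
  next
    case False
    have "s * DD T0 \<le> T0 * DD T0" using \<open>\<not> T0 \<le> s\<close> by (intro mult_right_mono DD_nn) simp
    also have "\<dots> \<le> t * DD t" using False by (intro tDD_mono1) auto
    finally show ?thesis unfolding e .
  qed
qed

lemma wt_deriv: "-1 < t \<Longrightarrow> (wt has_real_derivative DD t) (at t)"
  unfolding wt_def by (rule int_deriv[OF DD_cont])

lemma wt_isCont: "-1 < t \<Longrightarrow> isCont wt t"
  using wt_deriv DERIV_isCont by blast

lemma wt_concave: "concave_on {0..} wt"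
  unfolding concave_on_def
proof (rule convex_on_realI[where f'="\<lambda>x. - DD x"])
  show "connected {0::real..}" by simp
  show "((\<lambda>x. - wt x) has_real_derivative - DD x) (at x)" if "x \<in> {0..}" for x
    using that by (intro DERIV_minus wt_deriv) auto
  show "- DD x \<le> - DD y" if "x \<le> y" for x y using DD_anti[OF that] by simp
qed

lemma wt_lcvx: "convex_on {0..} (\<lambda>s. wt (exp s))"
proof (rule convex_on_realI[where f'="\<lambda>s. DD (exp s) * exp s"])
  show "connected {0::real..}" by simp
  show "((\<lambda>s. wt (exp s)) has_real_derivative DD (exp s) * exp s) (at s)" for s
    by (rule DERIV_chain2[OF wt_deriv DERIV_exp]) (smt (verit) exp_gt_zero)
  show "DD (exp x) * exp x \<le> DD (exp y) * exp y" if "x \<le> y" for x y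
    using tDD_mono[of "exp x" "exp y"] that by (simp add: mult.commute)
qed

lemma wt_cont: "continuous_on {0..} wt"
  by (intro continuous_at_imp_continuous_on ballI wt_isCont) auto

lemma wt_mono: assumes "0 \<le> s" "s \<le> t" shows "wt s \<le> wt t"
  by (rule deriv_mono_lemma[OF assms(2), where f'=DD]) (use assms in \<open>auto intro!: wt_deriv DD_nn\<close>)

lemma wt_nn: assumes "0 \<le> t" shows "0 \<le> wt t"
proof -
  have "0 \<le> wt 0" unfolding wt_def
    by (intro integral_nonneg integrable_continuous_interval DD_cont DD_nn)
  then show ?thesis using wt_mono[OF _ assms] by simp
qed

lemma wt_double: assumes "0 \<le> t" shows "wt (2 * t) \<le> 2 * wt t"
proof -
  have "(1/2) * wt 0 + (1/2) * wt (2 * t) \<le> wt ((1 - 1/2) *\<^sub>R 0 + (1/2) *\<^sub>R (2 * t))"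
    using concave_onD[OF wt_concave, of "1/2" 0 "2 * t"] assms by simp
  then show ?thesis using wt_nn[of 0] by simp
qed

lemma wt_upper: assumes "T0 \<le> t" shows "wt t \<le> wt T0 + phi (dl t) * w t"
proof -
  define c where "c = phi (dl t)"
  have c: "0 \<le> c" unfolding c_def using dl_pos[OF assms] by (rule phi_nn)
  have "c * w1 T0 - wt T0 \<le> c * w1 t - wt t"
  proof (rule deriv_mono_lemma[OF assms, where f'="\<lambda>u. c * dl u - DD u"])
    fix u assume u: "T0 \<le> u" "u \<le> t"
    show "((\<lambda>u. c * w1 u - wt u) has_real_derivative c * dl u - DD u) (at u)"
      using u T0 by (intro DERIV_diff DERIV_cmult w1_deriv wt_deriv) auto
    have "phi (dl u) \<le> c" unfolding c_def
      using u dl_pos[of t] T0 assms by (intro phi_anti dl_anti) auto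
    then show "0 \<le> c * dl u - DD u"
      using DD_eq[of u] u dl_pos[of u] by (simp add: mult_left_mono algebra_simps)
  qed
  then have "wt t \<le> wt T0 + c * (w1 t - w1 T0)" by (simp add: algebra_simps)
  also have "c * (w1 t - w1 T0) \<le> c * w t"
  proof (intro mult_left_mono c)
    have "w T0 / 4 \<le> w1 T0" "w1 t \<le> w t" using w1_bounds T0 assms by auto
    moreover have "0 \<le> w T0" using T0 by (intro w_nn) simp
    ultimately show "w1 t - w1 T0 \<le> w t" by linarith
  qed
  finally show ?thesis unfolding c_def by simp
qed

lemma wt_lower: assumes "T0 \<le> a" "a \<le> t" shows "phi (dl a) * (w t / 4 - w a) \<le> wt t"
proof -
  define c where "c = phi (dl a)"
  have c: "0 \<le> c" unfolding c_def using dl_pos[OF assms(1)] by (rule phi_nn)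
  have "wt a - c * w1 a \<le> wt t - c * w1 t"
  proof (rule deriv_mono_lemma[OF assms(2), where f'="\<lambda>u. DD u - c * dl u"])
    fix u assume u: "a \<le> u" "u \<le> t"
    show "((\<lambda>u. wt u - c * w1 u) has_real_derivative DD u - c * dl u) (at u)"
      using u T0 assms by (intro DERIV_diff DERIV_cmult w1_deriv wt_deriv) auto
    have "c \<le> phi (dl u)" unfolding c_def
      using u dl_pos[of u] T0 assms by (intro phi_anti dl_anti) auto
    then show "0 \<le> DD u - c * dl u"
      using DD_eq[of u] u dl_pos[of u] assms by (simp add: mult_left_mono algebra_simps)
  qed
  moreover have "0 \<le> wt a" using T0 assms by (intro wt_nn) simp
  moreover have "c * (w t / 4 - w a) \<le> c * (w1 t - w1 a)"
  proof (intro mult_left_mono c)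
    have "w t / 4 \<le> w1 t" "w1 a \<le> w a" using w1_bounds T0 assms by auto
    then show "w t / 4 - w a \<le> w1 t - w1 a" by linarith
  qed
  ultimately show ?thesis unfolding c_def by (simp add: algebra_simps)
qed

end

context L begin

lemma phi_dl_upper: assumes "T0 \<le> t" "t \<le> T n" shows "phi (dl t) \<le> real n + 2"
proof -
  have "y n \<le> dl (T n)" unfolding y_def using dl_pos[OF T_pos[of n]]
    by (simp add: divide_le_eq one_le_power)
  also have "dl (T n) \<le> dl t" using assms T0 by (intro dl_anti) auto
  finally show ?thesis by (rule phi_upper)
qed

lemma index: assumes "T N \<le> t" shows "\<exists>n\<ge>N. phi (dl t) \<le> real n + 3 \<and> P n t"
proof -
  obtain k0 :: nat where k0: "t < real k0" using reals_Archimedean2 by blast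
  have ex: "\<exists>k. t < T k" using k0 T_ge[of k0] T0 by (intro exI[of _ k0]) linarith
  define k where "k = (LEAST k. t < T k)"
  have tk: "t < T k" unfolding k_def by (rule LeastI_ex[OF ex])
  have "N < k"
  proof (rule ccontr)
    assume "\<not> N < k"
    then have "T k \<le> T N" by (intro T_mono) simp
    with tk assms show False by simp
  qed
  then obtain n where n: "k = Suc n" "N \<le> n" by (cases k) auto
  have "\<not> t < T n" unfolding k_def using n by (intro not_less_Least) (simp add: k_def)
  then have tn: "T n \<le> t" by simp
  have "phi (dl t) \<le> real (Suc n) + 2"
    using tk n T_pos[of n] tn by (intro phi_dl_upper) auto
  then show ?thesis using n tn TP[OF tn] by (intro exI[of _ n]) auto
qed

lemma psi_bounds: assumes "T N \<le> t"
  shows "phi (dl t) * w t \<le> f t / (real N + 3)" "phi (dl t) * w t \<le> t / (real N + 3)"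
    "phi (dl t) \<le> 1 / sqrt (R t)" "1 \<le> 1 / sqrt (R t)"
proof -
  obtain n where n: "N \<le> n" "phi (dl t) \<le> real n + 3" "P n t" using index[OF assms] by blast
  have t0: "T0 \<le> t" using T_pos[of N] assms by simp
  have wt0: "0 \<le> w t" using t0 T0 by (intro w_nn) simp
  have ph: "0 \<le> phi (dl t)" using dl_pos[OF t0] by (rule phi_nn)
  have pw: "phi (dl t) * w t \<le> (real n + 3) * w t" using n wt0 by (intro mult_right_mono)
  have q: "0 < real n + 3" by simp
  have Nn: "real N + 3 \<le> real n + 3" using n by simp
  have fP: "(real n + 3)^2 * w t \<le> f t" "(real n + 3)^2 * w t \<le> t" "R t \<le> 1 / (real n + 3)^2"
    using n(3) unfolding P_def by auto
  have "(real n + 3) * w t \<le> f t / (real n + 3)" using fP(1) q by (simp add: field_simps power2_eq_square)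
  also have "\<dots> \<le> f t / (real N + 3)"
    using fnn t0 T0 Nn by (intro divide_left_mono) auto
  finally show "phi (dl t) * w t \<le> f t / (real N + 3)" using pw by linarith
  have "(real n + 3) * w t \<le> t / (real n + 3)" using fP(2) q by (simp add: field_simps power2_eq_square)
  also have "\<dots> \<le> t / (real N + 3)"
    using t0 T0 Nn by (intro divide_left_mono) auto
  finally show "phi (dl t) * w t \<le> t / (real N + 3)" using pw by linarith
  have Rp: "0 < R t" using R_pos[of t] t0 T0 by simp
  have "sqrt (R t) \<le> sqrt (1 / (real n + 3)^2)" using fP(3) by simp
  also have "\<dots> = 1 / (real n + 3)" by (simp add: real_sqrt_divide)
  finally have "real n + 3 \<le> 1 / sqrt (R t)" using Rp q by (simp add: field_simps)
  then show "phi (dl t) \<le> 1 / sqrt (R t)" "1 \<le> 1 / sqrt (R t)" using n by linarith+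
qed

lemma w_o_wt: "w \<in> o[at_top](wt)"
proof (rule landau_o.smallI)
  fix c :: real assume c: "0 < c"
  obtain n :: nat where n: "8 / c \<le> real n" using real_arch_simple by blast
  have n8: "8 \<le> c * (real n + 1)" using n c by (simp add: field_simps)
  have "\<forall>\<^sub>F t in at_top. dl t < y n" using dl_to0 y_pos[of n] by (rule order_tendstoD)
  then obtain M where M: "\<And>t. M \<le> t \<Longrightarrow> dl t < y n" by (auto simp: eventually_at_top_linorder)
  define a where "a = max M T0"
  have a: "T0 \<le> a" "dl a \<le> y n" using M[of a] by (auto simp: a_def)
  have pa: "real n + 1 \<le> phi (dl a)" using dl_pos[OF a(1)] a(2) by (rule phi_lower)
  have "\<forall>\<^sub>F t in at_top. 8 * w a \<le> w t" using w_at_top by (simp add: filterlim_at_top)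
  moreover have "\<forall>\<^sub>F t in at_top. a \<le> t" by (rule eventually_ge_at_top)
  ultimately show "\<forall>\<^sub>F t in at_top. norm (w t) \<le> c * norm (wt t)"
  proof eventually_elim
    case (elim t)
    have t0: "0 \<le> t" "0 \<le> a" using elim a T0 by auto
    have wt0: "0 \<le> w t" using t0 by (intro w_nn)
    have l: "phi (dl a) * (w t / 4 - w a) \<le> wt t" using wt_lower[OF a(1) elim(2)] .
    have "phi (dl a) * (w t / 8) \<le> phi (dl a) * (w t / 4 - w a)"
      using elim pa by (intro mult_left_mono) auto
    moreover have "(real n + 1) * (w t / 8) \<le> phi (dl a) * (w t / 8)"
      using pa wt0 by (intro mult_right_mono) auto
    ultimately have "(real n + 1) * w t \<le> 8 * wt t" using l by linarith
    then have B: "c * ((real n + 1) * w t) \<le> c * (8 * wt t)"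
      using c by (intro mult_left_mono) auto
    have A: "8 * w t \<le> (c * (real n + 1)) * w t" using mult_right_mono[OF n8 wt0] .
    have "8 * w t \<le> 8 * (c * wt t)" using A B by (simp only: mult.assoc mult.left_commute)
    then have "w t \<le> c * wt t" by simp
    then show ?case using wt0 wt_nn[of t] t0 by simp
  qed
qed

lemma wt_o_f: "wt \<in> o[at_top](f)"
proof (rule landau_o.smallI)
  fix c :: real assume c: "0 < c"
  obtain N :: nat where N: "2 / c \<le> real N" using real_arch_simple by blast
  have N2: "1 / (real N + 3) \<le> c / 2" using N c by (simp add: field_simps)
  have "\<forall>\<^sub>F t in at_top. (2 / c) * wt T0 \<le> w t" using w_at_top by (simp add: filterlim_at_top)
  moreover have "\<forall>\<^sub>F t in at_top. T N \<le> t" by (rule eventually_ge_at_top)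
  moreover have "\<forall>\<^sub>F t in at_top. T 0 \<le> t" by (rule eventually_ge_at_top)
  ultimately show "\<forall>\<^sub>F t in at_top. norm (wt t) \<le> c * norm (f t)"
  proof eventually_elim
    case (elim t)
    have t0: "T0 \<le> t" using T_pos[of N] elim by simp
    have f0: "0 \<le> f t" using fnn t0 T0 by auto
    have "9 * w t \<le> f t" using TP[OF elim(3)] unfolding P_def by simp
    moreover have "0 \<le> w t" using t0 T0 by (intro w_nn) simp
    ultimately have "(2 / c) * wt T0 \<le> f t" using elim(1) by linarith
    then have a: "wt T0 \<le> (c/2) * f t" using c by (simp add: field_simps)
    have b: "phi (dl t) * w t \<le> f t / (real N + 3)" by (rule psi_bounds(1)[OF elim(2)])
    have "f t / (real N + 3) \<le> (c/2) * f t" using N2 f0 mult_right_mono[OF N2 f0] by simp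
    then have "wt t \<le> c * f t" using wt_upper[OF t0] a b by linarith
    then show ?case using wt_nn[of t] t0 T0 f0 by simp
  qed
qed

lemma wt_o_t: "wt \<in> o[at_top](\<lambda>t. t)"
proof (rule landau_o.smallI)
  fix c :: real assume c: "0 < c"
  obtain N :: nat where N: "2 / c \<le> real N" using real_arch_simple by blast
  have N2: "1 / (real N + 3) \<le> c / 2" using N c by (simp add: field_simps)
  have "\<forall>\<^sub>F t in at_top. (2 / c) * wt T0 \<le> t" by (rule eventually_ge_at_top)
  moreover have "\<forall>\<^sub>F t in at_top. T N \<le> t" by (rule eventually_ge_at_top)
  ultimately show "\<forall>\<^sub>F t in at_top. norm (wt t) \<le> c * norm t"
  proof eventually_elim
    case (elim t)
    have t0: "T0 \<le> t" using T_pos[of N] elim by simp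
    have f0: "0 \<le> t" using t0 T0 by auto
    have a: "wt T0 \<le> (c/2) * t" using c elim(1) by (simp add: field_simps)
    have b: "phi (dl t) * w t \<le> t / (real N + 3)" by (rule psi_bounds(2)[OF elim(2)])
    have "t / (real N + 3) \<le> (c/2) * t" using N2 f0 mult_right_mono[OF N2 f0] by simp
    then have "wt t \<le> c * t" using wt_upper[OF t0] a b by linarith
    then show ?case using wt_nn[of t] t0 T0 f0 by simp
  qed
qed

lemma wt_nq: "(\<lambda>t. wt t / t ^ 2) integrable_on {1..}"
proof -
  have i1: "(\<lambda>t. wt t / t ^ 2) integrable_on {1..2}"
    by (rule integrable_continuous_interval)
       (intro continuous_intros continuous_on_subset[OF wt_cont], auto)
  define K where "K = max (wt T0) 1 + wt (T 0) * sqrt (R 2)"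
  have i2: "(\<lambda>t. wt t / t ^ 2) integrable_on {2..}"
  proof (rule measurable_bounded_by_integrable_imp_integrable_real)
    show "(\<lambda>t. wt t / t ^ 2) \<in> borel_measurable (lebesgue_on {2..})"
      by (rule continuous_imp_measurable_on_sets_lebesgue)
         (intro continuous_intros continuous_on_subset[OF wt_cont], auto)
    show "{2::real..} \<in> sets lebesgue" by simp
    show "(\<lambda>t. K * h t) integrable_on {2..}" using integrable_cmul[OF h_int, of K] by simp
    fix t :: real assume t: "t \<in> {2..}"
    then have t2: "2 \<le> t" by simp
    have Rp: "0 < R t" using R_pos t2 by simp
    have wtn: "0 \<le> wt t" using t2 by (intro wt_nn) simp
    have wn: "0 \<le> w t" using t2 by (intro w_nn) simp
    have hh: "h t = (w t + 1) / t^2 * (1 / sqrt (R t))"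
      unfolding h_def g_def using t2 by (simp add: field_simps)
    have K1: "max (wt T0) 1 \<le> K" "wt (T 0) * sqrt (R 2) \<le> K"
      unfolding K_def using wt_nn[of "T 0"] wt_nn[of T0] T0 T_pos[of 0] R_pos[of 2] by auto
    have hn: "0 \<le> h t" using t2 by (intro h_nn) simp
    define \<rho> where "\<rho> = 1 / sqrt (R t)"
    define q where "q = (w t + 1) * \<rho>"
    have rp: "0 < \<rho>" unfolding \<rho>_def using Rp by simp
    have qr: "\<rho> \<le> q" unfolding q_def using rp wn by (simp add: algebra_simps)
    have hq: "h t = q / t^2" unfolding hh q_def \<rho>_def by simp
    have M1: "1 \<le> max (wt T0) 1" by simp
    have "wt t \<le> K * q"
    proof (cases "T 0 \<le> t")
      case True
      have p: "phi (dl t) \<le> \<rho>" "1 \<le> \<rho>" using psi_bounds(3,4)[OF True] unfolding \<rho>_def .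
      have u: "wt t \<le> wt T0 + phi (dl t) * w t" using wt_upper T_pos[of 0] True by simp
      have a1: "phi (dl t) * w t \<le> \<rho> * w t" using p wn by (intro mult_right_mono)
      have a2: "\<rho> * w t \<le> max (wt T0) 1 * (\<rho> * w t)"
        using rp wn mult_right_mono[OF M1, of "\<rho> * w t"] by simp
      have b: "wt T0 \<le> max (wt T0) 1 * \<rho>"
        using mult_left_mono[OF p(2), of "max (wt T0) 1"] by simp
      have e: "max (wt T0) 1 * q = max (wt T0) 1 * \<rho> + max (wt T0) 1 * (\<rho> * w t)"
        unfolding q_def by (simp add: algebra_simps)
      have "wt t \<le> max (wt T0) 1 * q" unfolding e using u a1 a2 b by linarith
      also have "\<dots> \<le> K * q" using K1 qr rp by (intro mult_right_mono) auto
      finally show ?thesis .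
    next
      case False
      have m: "wt t \<le> wt (T 0)" using False t2 by (intro wt_mono) auto
      have "sqrt (R t) \<le> sqrt (R 2)" using R_anti[of 2 t] t2 by simp
      then have r: "1 \<le> sqrt (R 2) * \<rho>" unfolding \<rho>_def using Rp by (simp add: field_simps)
      have w0: "0 \<le> wt (T 0)" using T_pos[of 0] T0 by (intro wt_nn) simp
      have "wt (T 0) \<le> wt (T 0) * (sqrt (R 2) * \<rho>)" using mult_left_mono[OF r w0] by simp
      also have "\<dots> \<le> wt (T 0) * (sqrt (R 2) * q)"
        using qr w0 R_pos[of 2] by (intro mult_left_mono) auto
      also have "\<dots> = (wt (T 0) * sqrt (R 2)) * q" by simp
      also have "\<dots> \<le> K * q" using K1 qr rp by (intro mult_right_mono) auto
      finally show ?thesis using m by linarith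
    qed
    then have "wt t / t^2 \<le> K * q / t^2" using t2 by (simp add: divide_right_mono)
    then have "wt t / t^2 \<le> K * h t" unfolding hq by simp
    then show "\<bar>wt t / t ^ 2\<bar> \<le> K * h t" using wtn by simp
  qed
  have "{1..2} \<inter> {2..} = {2::real}" by auto
  then have "negligible ({1..2} \<inter> {2::real..})" by simp
  moreover have "{1::real..} = {1..2} \<union> {2..}" by auto
  ultimately show ?thesis using integrable_Un'[OF i1 i2] by simp
qed

end

theorem lemma6p2:
  fixes \<omega> f :: "real \<Rightarrow> real"
  assumes "concave_weight \<omega>" and "non_quasianalytic \<omega>"
    and "\<forall>t\<ge>0. f t \<ge> 0"
    and "\<omega> \<in> o[at_top](f)"
  shows "\<exists>\<omega>'. concave_weight \<omega>' \<and> non_quasianalytic \<omega>' \<and>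
           \<omega> \<in> o[at_top](\<omega>') \<and> \<omega>' \<in> o[at_top](f)"
proof -
  have A: "continuous_on {0..} \<omega>" "mono_on {0..} \<omega>" "\<forall>t\<ge>0. \<omega> t \<ge> 0"
    "\<omega> \<in> o[at_top](\<lambda>t. t)" "(\<lambda>t. ln t) \<in> o[at_top](\<omega>)"
    "convex_on {0..} (\<lambda>t. \<omega> (exp t))" "concave_on {0..} \<omega>"
    using assms(1) unfolding concave_weight_def weight_function_def by auto
  interpret L \<omega> f
    using A assms(2,3,4) by unfold_locales (auto simp: non_quasianalytic_def)
  have mono: "mono_on {0..} wt" by (rule mono_onI) (auto intro: wt_mono)
  have dbl: "(\<lambda>t. wt (2 * t)) \<in> O[at_top](wt)"
  proof (rule landau_o.bigI[of 2])
    show "\<forall>\<^sub>F t in at_top. norm (wt (2 * t)) \<le> 2 * norm (wt t)"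
      using eventually_ge_at_top[of "0::real"]
    proof eventually_elim
      case (elim t)
      then show ?case using wt_double[of t] wt_nn[of t] wt_nn[of "2 * t"] by simp
    qed
  qed simp
  have ln: "(\<lambda>t. ln t) \<in> o[at_top](wt)" by (rule landau_o.small_trans[OF big w_o_wt])
  have "concave_weight wt"
    unfolding concave_weight_def weight_function_def
    using wt_cont mono wt_nn dbl wt_o_t ln wt_lcvx wt_concave by auto
  moreover have "non_quasianalytic wt" unfolding non_quasianalytic_def by (rule wt_nq)
  ultimately show ?thesis using w_o_wt wt_o_f by blast
qed


end
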